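(* There exist a temporal graph $\mathcal{G}=(X,A)\in\mathbb{T}_{n,T,p}$ (with $T=2$, no node or edge attributes beyond edge presence) whose aggregated graph consists of two connected components, and nodes $u,v,w$ with $u,w$ in the same component, $(u,w)$ an edge at time $T$, and $v$ in the other component, such that for every node-equivariant temporal node representation $f:\mathbb{T}_{n,T,p}\to\mathbb{R}^{n\times d}$ (in particular every one in the time-and-graph or time-then-graph families built from equivariant components) one has $f(\mathcal{G})_u=f(\mathcal{G})_v$, and hence for every link-scoring function $s:\mathbb{R}^d\times\mathbb{R}^d\to\mathbb{R}$, $s(f(\mathcal{G})_u,f(\mathcal{G})_w)=s(f(\mathcal{G})_v,f(\mathcal{G})_w)$. Consequently no link predictor based on equivariant temporal node representations can correctly predict temporal links on $\mathcal{G}$.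
   Context: $\mathbb{T}_{n,T,p}=\mathbb{R}^{n\times T\times p}\times\mathbb{R}^{n\times n\times T\times p}$ is the set of temporal graphs $(X,A)$ on node set $V=\{1,\dots,n\}$ over $T$ time steps with node attributes $X_{i,t}$ and edge attributes $A_{i,j,t}$ (an edge $(i,j)$ is present at time $t$ iff $A_{i,j,t}\neq0$). The aggregated graph has an edge $\{i,j\}$ iff $A_{i,j,t}\ne0$ for some $t$. A permutation $\pi$ of $V$ acts by $(\pi X)_{\pi(i),t}=X_{i,t}$, $(\pi A)_{\pi(i),\pi(j),t}=A_{i,j,t}$, and on $Z\in\mathbb{R}^{n\times d}$ by $(\pi Z)_{\pi(i)}=Z_i$. A temporal node representation $f:\mathbb{T}_{n,T,p}\to\mathbb{R}^{n\times d}$ is node-equivariant if $f(\pi\mathcal{G})=\pi f(\mathcal{G})$ for all $\pi$ and $\mathcal{G}$. A link between $a,b$ is predicted by applying $s$ to $(f(\mathcal{G})_a,f(\mathcal{G})_b)$. *)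

theory Defs
  imports Complex_Main "HOL-Combinatorics.Permutations"
begin

text \<open>Temporal graphs (X, A) with 0-based indices: nodes 0..<n, time steps 0..<T,
  feature coordinates 0..<p.  X i t k is the k-th coordinate of X_{i,t};
  A i j t k is the k-th coordinate of A_{i,j,t}.\<close>

type_synonym tgraph = "(nat \<Rightarrow> nat \<Rightarrow> nat \<Rightarrow> real) \<times> (nat \<Rightarrow> nat \<Rightarrow> nat \<Rightarrow> nat \<Rightarrow> real)"

definition in_TG :: "nat \<Rightarrow> nat \<Rightarrow> nat \<Rightarrow> tgraph \<Rightarrow> bool" where
  "in_TG n T p G \<longleftrightarrow>
     (\<forall>i t k. fst G i t k \<noteq> 0 \<longrightarrow> i < n \<and> t < T \<and> k < p) \<and>
     (\<forall>i j t k. snd G i j t k \<noteq> 0 \<longrightarrow> i < n \<and> j < n \<and> t < T \<and> k < p)"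

definition in_mat :: "nat \<Rightarrow> nat \<Rightarrow> (nat \<Rightarrow> nat \<Rightarrow> real) \<Rightarrow> bool" where
  "in_mat n d Z \<longleftrightarrow> (\<forall>i k. Z i k \<noteq> 0 \<longrightarrow> i < n \<and> k < d)"

text \<open>Action of a permutation pi of the node set: (pi X)_{pi i} = X_i etc.\<close>
definition perm_TG :: "(nat \<Rightarrow> nat) \<Rightarrow> tgraph \<Rightarrow> tgraph" where
  "perm_TG \<pi> G = ((\<lambda>i t k. fst G (inv \<pi> i) t k),
                   (\<lambda>i j t k. snd G (inv \<pi> i) (inv \<pi> j) t k))"

definition perm_mat :: "(nat \<Rightarrow> nat) \<Rightarrow> (nat \<Rightarrow> nat \<Rightarrow> real) \<Rightarrow> (nat \<Rightarrow> nat \<Rightarrow> real)" where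
  "perm_mat \<pi> Z = (\<lambda>i k. Z (inv \<pi> i) k)"

definition node_equivariant ::
  "nat \<Rightarrow> nat \<Rightarrow> nat \<Rightarrow> nat \<Rightarrow> (tgraph \<Rightarrow> nat \<Rightarrow> nat \<Rightarrow> real) \<Rightarrow> bool" where
  "node_equivariant n T p d f \<longleftrightarrow>
     (\<forall>G. in_TG n T p G \<longrightarrow> in_mat n d (f G)) \<and>
     (\<forall>\<pi> G. \<pi> permutes {..<n} \<and> in_TG n T p G \<longrightarrow> f (perm_TG \<pi> G) = perm_mat \<pi> (f G))"

definition aggr_edge :: "nat \<Rightarrow> nat \<Rightarrow> nat \<Rightarrow> (nat \<Rightarrow> nat \<Rightarrow> nat \<Rightarrow> nat \<Rightarrow> real) \<Rightarrow> nat \<Rightarrow> nat \<Rightarrow> bool" where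
  "aggr_edge n T p A i j \<longleftrightarrow> i < n \<and> j < n \<and>
     (\<exists>t<T. \<exists>k<p. A i j t k \<noteq> 0 \<or> A j i t k \<noteq> 0)"

definition same_comp :: "nat \<Rightarrow> nat \<Rightarrow> nat \<Rightarrow> (nat \<Rightarrow> nat \<Rightarrow> nat \<Rightarrow> nat \<Rightarrow> real) \<Rightarrow> nat rel" where
  "same_comp n T p A = {(i, j). i < n \<and> j < n \<and> (aggr_edge n T p A)\<^sup>*\<^sup>* i j}"

definition num_components :: "nat \<Rightarrow> nat \<Rightarrow> nat \<Rightarrow> (nat \<Rightarrow> nat \<Rightarrow> nat \<Rightarrow> nat \<Rightarrow> real) \<Rightarrow> nat" where
  "num_components n T p A = card ({..<n} // same_comp n T p A)"

end

theory Submission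
  imports Defs
begin

definition A0 :: "nat \<Rightarrow> nat \<Rightarrow> nat \<Rightarrow> nat \<Rightarrow> real" where
  "A0 = (\<lambda>i j t k. if t = 1 \<and> k = 0 \<and> (i,j) \<in> {(0,1),(1,0),(2,3),(3,2)} then 1 else 0)"

definition pi0 :: "nat \<Rightarrow> nat" where
  "pi0 = (\<lambda>i. if i < 4 then (i + 2) mod 4 else i)"

lemma aggr0: "aggr_edge 4 2 1 A0 i j \<longleftrightarrow> (i,j) \<in> {(0,1),(1,0),(2,3),(3,2)}"
  unfolding aggr_edge_def A0_def by auto

lemma rt0: "(aggr_edge 4 2 1 A0)\<^sup>*\<^sup>* i j \<longleftrightarrow> i = j \<or> (i < 4 \<and> j < 4 \<and> (i < 2 \<longleftrightarrow> j < 2))"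
proof
  assume "(aggr_edge 4 2 1 A0)\<^sup>*\<^sup>* i j"
  then show "i = j \<or> (i < 4 \<and> j < 4 \<and> (i < 2 \<longleftrightarrow> j < 2))"
    by (induction rule: rtranclp_induct) (auto simp: aggr0 aggr0[simplified])
next
  assume h: "i = j \<or> (i < 4 \<and> j < 4 \<and> (i < 2 \<longleftrightarrow> j < 2))"
  show "(aggr_edge 4 2 1 A0)\<^sup>*\<^sup>* i j"
  proof (cases "i = j")
    case False
    with h have "aggr_edge 4 2 1 A0 i j"
      unfolding aggr0 by (auto simp: less_Suc_eq eval_nat_numeral)
    then show ?thesis by auto
  qed auto
qed

lemma sc0: "same_comp 4 2 1 A0 = {(i,j). i < 4 \<and> j < 4 \<and> (i < 2 \<longleftrightarrow> j < 2)}"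
  unfolding same_comp_def rt0 by auto

lemma quot0: "{..<4::nat} // same_comp 4 2 1 A0 = {{0,1},{2,3}}"
proof -
  have e: "{..<4::nat} = {0,1,2,3}" by auto
  have "same_comp 4 2 1 A0 `` {0} = {0,1}" "same_comp 4 2 1 A0 `` {1} = {0,1}"
       "same_comp 4 2 1 A0 `` {2} = {2,3}" "same_comp 4 2 1 A0 `` {3} = {2,3}"
    unfolding sc0 by (auto simp: less_Suc_eq eval_nat_numeral)
  then show ?thesis unfolding quotient_def e by auto
qed

lemma pi0_vals: "pi0 0 = 2" "pi0 1 = 3" "pi0 2 = 0" "pi0 3 = 1" "i \<ge> 4 \<Longrightarrow> pi0 i = i"
  unfolding pi0_def by auto

lemma cases4: "(i::nat) = 0 \<or> i = 1 \<or> i = 2 \<or> i = 3 \<or> i \<ge> 4"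
  by auto

lemma pi0_inv: "pi0 (pi0 i) = i"
  using cases4[of i] pi0_vals by auto

lemma pi0_perm: "pi0 permutes {..<4}"
  unfolding permutes_def
proof (intro conjI allI impI)
  fix x :: nat assume "x \<notin> {..<4}" then show "pi0 x = x" by (simp add: pi0_def)
next
  fix y show "\<exists>!x. pi0 x = y"
  proof (rule ex1I[of _ "pi0 y"])
    show "pi0 (pi0 y) = y" by (rule pi0_inv)
    fix x assume "pi0 x = y" then show "x = pi0 y" using pi0_inv by auto
  qed
qed

lemma inv_pi0: "inv pi0 = pi0"
  by (rule inv_equality) (rule pi0_inv)+

lemma pi0_ge: "pi0 i \<ge> 4 \<longleftrightarrow> i \<ge> 4"
  using cases4[of i] pi0_vals by auto

lemma A0_pi: "A0 (pi0 i) (pi0 j) t k = A0 i j t k"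
proof -
  have "((pi0 i, pi0 j) \<in> {(0,1),(1,0),(2,3),(3,2)}) = ((i, j) \<in> {(0,1),(1,0),(2,3),(3,2)})"
    using cases4[of i] cases4[of j]
    apply (elim disjE)
    apply (simp_all add: pi0_vals pi0_vals[simplified])
    done
  then show ?thesis unfolding A0_def by simp
qed

theorem theorem2:
  shows "\<exists>n X A u v w.
     in_TG n 2 1 (X, A) \<and>
     (\<forall>i t k. X i t k = 0) \<and>
     (\<forall>i j t k. A i j t k \<in> {0, 1}) \<and>
     num_components n 2 1 A = 2 \<and>
     u < n \<and> v < n \<and> w < n \<and>
     (u, w) \<in> same_comp n 2 1 A \<and>
     A u w 1 0 \<noteq> 0 \<and>
     (u, v) \<notin> same_comp n 2 1 A \<and>
     (\<forall>d f. node_equivariant n 2 1 d f \<longrightarrow>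
        f (X, A) u = f (X, A) v \<and>
        (\<forall>s :: (nat \<Rightarrow> real) \<Rightarrow> (nat \<Rightarrow> real) \<Rightarrow> real.
            s (f (X, A) u) (f (X, A) w) = s (f (X, A) v) (f (X, A) w)))"
proof (intro exI conjI allI impI)
  let ?X = "\<lambda>(i::nat) (t::nat) (k::nat). 0::real"
  show tg: "in_TG 4 2 1 (?X, A0)" unfolding in_TG_def A0_def by auto
  show "\<And>i t k. ?X i t k = 0" by simp
  show "\<And>i j t k. A0 i j t k \<in> {0, 1}" unfolding A0_def by auto
  show "num_components 4 2 1 A0 = 2" proof -
    have "card {{0::nat,1},{2,3}} = 2" by (simp add: doubleton_eq_iff)
    then show ?thesis unfolding num_components_def quot0 .
  qed
  show "(0::nat) < 4" "(2::nat) < 4" "(1::nat) < 4" by auto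
  show "(0, 1) \<in> same_comp 4 2 1 A0" unfolding sc0 by auto
  show "A0 0 1 1 0 \<noteq> 0" unfolding A0_def by auto
  show "(0, 2) \<notin> same_comp 4 2 1 A0" unfolding sc0 by auto
  fix d f assume eq: "node_equivariant 4 2 1 d f"
  have "perm_TG pi0 (?X, A0) = (?X, A0)"
    unfolding perm_TG_def inv_pi0 by (simp add: A0_pi fun_eq_iff)
  then have "f (?X, A0) = perm_mat pi0 (f (?X, A0))"
    using eq pi0_perm tg unfolding node_equivariant_def by metis
  then have "f (?X, A0) 2 = f (?X, A0) 0"
    proof -
    have p: "pi0 2 = 0" by (simp add: pi0_def)
    have "f (?X, A0) 2 = (\<lambda>k. f (?X, A0) (pi0 2) k)"
      using \<open>f (?X, A0) = perm_mat pi0 (f (?X, A0))\<close> unfolding perm_mat_def inv_pi0 by metis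
    then show ?thesis using p by simp
  qed
  then show "f (?X, A0) 0 = f (?X, A0) 2" by simp
  fix s :: "(nat \<Rightarrow> real) \<Rightarrow> (nat \<Rightarrow> real) \<Rightarrow> real"
  show "s (f (?X, A0) 0) (f (?X, A0) 1) = s (f (?X, A0) 2) (f (?X, A0) 1)"
    using \<open>f (?X, A0) 2 = f (?X, A0) 0\<close> by simp
qed

end
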